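(* Suppose $\Psi(t)=1-t$, and let $c\colon\mathcal{X}\times\mathcal{Y}\to[0,1]$ be any cost function. Let $\mathcal{H}_{\mathrm{all}}$ be the family of all measurable functions $\mathcal{X}\times\overline{\mathcal{Y}}\to\mathbb{R}$. Then for all $h\in\mathcal{H}_{\mathrm{all}}$ and any distribution on $\mathcal{X}\times\mathcal{Y}$, $$\mathcal{E}_{\mathsf{L}_{\mathrm{def}}}(h)-\mathcal{E}^*_{\mathsf{L}_{\mathrm{def}}}(\mathcal{H}_{\mathrm{all}})\le(n+1)\big(\mathcal{E}_{\mathsf{L}_{\mathrm{RL2D}}}(h)-\mathcal{E}^*_{\mathsf{L}_{\mathrm{RL2D}}}(\mathcal{H}_{\mathrm{all}})\big).$$ Furthermore, $\mathsf{L}_{\mathrm{RL2D}}$ is Bayes-consistent with respect to $\mathsf{L}_{\mathrm{def}}$: for any distribution and any sequence $(h_k)$ in $\mathcal{H}_{\mathrm{all}}$, $\mathcal{E}_{\mathsf{L}_{\mathrm{RL2D}}}(h_k)-\mathcal{E}^*_{\mathsf{L}_{\mathrm{RL2D}}}(\mathcal{H}_{\mathrm{all}})\to0$ implies $\mathcal{E}_{\mathsf{L}_{\mathrm{def}}}(h_k)-\mathcal{E}^*_{\mathsf{L}_{\mathrm{def}}}(\mathcal{H}_{\mathrm{all}})\to0$.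
   Context: Learning to defer. $\mathcal{X}$ is an input space, $\mathcal{Y}=[n]$, $\overline{\mathcal{Y}}=\{1,\dots,n+1\}$ with $n+1$ meaning "defer". For $h\colon\mathcal{X}\times\overline{\mathcal{Y}}\to\mathbb{R}$, $\mathsf{h}(x)=\operatorname{argmax}_{y\in\overline{\mathcal{Y}}}h(x,y)$ with a fixed deterministic tie-breaking rule. Given a cost $c\colon\mathcal{X}\times\mathcal{Y}\to[0,1]$, the deferral loss is $\mathsf{L}_{\mathrm{def}}(h,x,y)=1_{\mathsf{h}(x)\neq y}1_{\mathsf{h}(x)\in[n]}+c(x,y)1_{\mathsf{h}(x)=n+1}$, and for non-increasing $\Psi$ the surrogate is $\mathsf{L}_{\mathrm{RL2D}}(h,x,y)=c(x,y)\Psi\big(\frac{e^{h(x,y)}}{\sum_{y'\in\overline{\mathcal{Y}}}e^{h(x,y')}}\big)+(1-c(x,y))\Psi\big(\frac{e^{h(x,y)}+e^{h(x,n+1)}}{\sum_{y'\in\overline{\mathcal{Y}}}e^{h(x,y')}}\big)$. $\mathcal{E}_{\mathsf{L}}(h)=\mathbb{E}_{(x,y)}[\mathsf{L}(h,x,y)]$ and $\mathcal{E}^*_{\mathsf{L}}(\mathcal{H})=\inf_{h\in\mathcal{H}}\mathcal{E}_{\mathsf{L}}(h)$. *)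

theory Defs
  imports "HOL-Probability.Probability"
begin

text \<open>Labels: \<open>Y = {1..n}\<close>, augmented labels \<open>Ybar = {1..n+1}\<close>, \<open>n+1\<close> = defer.
  Scoring functions \<open>h :: 'a \<Rightarrow> nat \<Rightarrow> real\<close> (only values on \<open>Ybar\<close> matter).\<close>

definition Ybar :: "nat \<Rightarrow> nat set" where
  "Ybar n = {1..n+1}"

definition hpred :: "nat \<Rightarrow> ('a \<Rightarrow> nat \<Rightarrow> real) \<Rightarrow> 'a \<Rightarrow> nat" where
  "hpred n h x = (LEAST y. y \<in> Ybar n \<and> (\<forall>y'\<in>Ybar n. h x y' \<le> h x y))"

definition L_def :: "nat \<Rightarrow> ('a \<Rightarrow> nat \<Rightarrow> real) \<Rightarrow> ('a \<Rightarrow> nat \<Rightarrow> real) \<Rightarrow> 'a \<Rightarrow> nat \<Rightarrow> real" where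
  "L_def n c h x y =
     (if hpred n h x \<noteq> y \<and> hpred n h x \<in> {1..n} then 1 else 0)
     + (if hpred n h x = n + 1 then c x y else 0)"

definition L_RL2D :: "(real \<Rightarrow> real) \<Rightarrow> nat \<Rightarrow> ('a \<Rightarrow> nat \<Rightarrow> real) \<Rightarrow> ('a \<Rightarrow> nat \<Rightarrow> real) \<Rightarrow> 'a \<Rightarrow> nat \<Rightarrow> real" where
  "L_RL2D \<Psi> n c h x y =
     c x y * \<Psi> (exp (h x y) / (\<Sum>y'\<in>Ybar n. exp (h x y')))
     + (1 - c x y) * \<Psi> ((exp (h x y) + exp (h x (n + 1))) / (\<Sum>y'\<in>Ybar n. exp (h x y')))"

text \<open>All measurable scoring functions \<open>X \<times> Ybar \<rightarrow> \<real>\<close> (Ybar carries the discrete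
  sigma-algebra, so measurability means measurability in \<open>x\<close> for each label).\<close>
definition H_all :: "'a measure \<Rightarrow> nat \<Rightarrow> ('a \<Rightarrow> nat \<Rightarrow> real) set" where
  "H_all M n = {h. \<forall>y\<in>Ybar n. (\<lambda>x. h x y) \<in> borel_measurable M}"

definition risk :: "('a \<times> nat) measure \<Rightarrow> ('a \<Rightarrow> nat \<Rightarrow> real) \<Rightarrow> real" where
  "risk D L = (\<integral>z. L (fst z) (snd z) \<partial>D)"

definition best_risk :: "('a \<times> nat) measure \<Rightarrow> ('a \<Rightarrow> nat \<Rightarrow> real) set
    \<Rightarrow> (('a \<Rightarrow> nat \<Rightarrow> real) \<Rightarrow> 'a \<Rightarrow> nat \<Rightarrow> real) \<Rightarrow> real" where
  "best_risk D H L = (INF h\<in>H. risk D (L h))"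

end

theory Submission
  imports Defs
begin


lemma Ybar_fin[simp]: "finite (Ybar n)" by (simp add: Ybar_def)
lemma Ybar_ins: "Ybar n = insert (n+1) {1..n}" by (auto simp: Ybar_def)
lemma card_Ybar: "card (Ybar n) = n + 1" by (simp add: Ybar_def)
lemma Ybar_ne[simp]: "Ybar n \<noteq> {}" by (auto simp: Ybar_def)
lemma Ybar_mem: "y \<in> {1..n} \<Longrightarrow> y \<in> Ybar n" "n + 1 \<in> Ybar n" by (auto simp: Ybar_def)

lemma hpred_props:
  shows "hpred n h x \<in> Ybar n" and "\<And>y'. y' \<in> Ybar n \<Longrightarrow> h x y' \<le> h x (hpred n h x)"
proof -
  have "Max (h x ` Ybar n) \<in> h x ` Ybar n" by (intro Max_in) auto
  then obtain y where y: "y \<in> Ybar n" "h x y = Max (h x ` Ybar n)" by (metis (no_types, lifting) imageE)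
  then have "y \<in> Ybar n \<and> (\<forall>y'\<in>Ybar n. h x y' \<le> h x y)" by auto
  then have "hpred n h x \<in> Ybar n \<and> (\<forall>y'\<in>Ybar n. h x y' \<le> h x (hpred n h x))"
    unfolding hpred_def by (rule LeastI)
  then show "hpred n h x \<in> Ybar n" and "\<And>y'. y' \<in> Ybar n \<Longrightarrow> h x y' \<le> h x (hpred n h x)" by auto
qed

lemma hpred_cong: "(\<And>y. y \<in> Ybar n \<Longrightarrow> h x y = h' x y) \<Longrightarrow> hpred n h x = hpred n h' x"
  unfolding hpred_def by (metis (no_types, lifting))

definition sm :: "nat \<Rightarrow> ('a \<Rightarrow> nat \<Rightarrow> real) \<Rightarrow> 'a \<Rightarrow> nat \<Rightarrow> real" where
  "sm n h x j = exp (h x j) / (\<Sum>j'\<in>Ybar n. exp (h x j'))"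

lemma Z_pos: "0 < (\<Sum>j'\<in>Ybar n. exp ((h :: 'a \<Rightarrow> nat \<Rightarrow> real) x j'))"
  by (rule ordered_comm_monoid_add_class.sum_pos) auto

lemma sm_pos: "0 < sm n h x j" using Z_pos[where n=n and h=h and x=x] by (simp add: sm_def)

lemma sm_sum: "(\<Sum>j\<in>Ybar n. sm n h x j) = 1"
  using Z_pos[where n=n and h=h and x=x] by (simp add: sm_def sum_divide_distrib[symmetric])

lemma sm_mono: "h x j \<le> h x j' \<Longrightarrow> sm n h x j \<le> sm n h x j'"
  using Z_pos[where n=n and h=h and x=x] by (simp add: sm_def divide_right_mono)

lemma sm_le_exp: "j \<in> Ybar n \<Longrightarrow> k \<in> Ybar n \<Longrightarrow> sm n h x j \<le> exp (h x j) / exp (h x k)"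
proof -
  assume j: "j \<in> Ybar n" and k: "k \<in> Ybar n"
  have "exp (h x k) \<le> (\<Sum>j'\<in>Ybar n. exp (h x j'))"
    using k by (intro member_le_sum) auto
  then show ?thesis unfolding sm_def using Z_pos[where n=n and h=h and x=x] by (intro divide_left_mono) auto
qed

lemma RL_eq: "y \<in> {1..n} \<Longrightarrow>
  L_RL2D (\<lambda>t. 1 - t) n c h x y = 1 - sm n h x y - (1 - c x y) * sm n h x (n+1)"
  unfolding L_RL2D_def sm_def using Z_pos[where n=n and h=h and x=x] by (simp add: field_simps)

lemma sm_two: "y \<in> {1..n} \<Longrightarrow> sm n h x y + sm n h x (n+1) \<le> 1"
proof -
  assume y: "y \<in> {1..n}"
  have "(\<Sum>j\<in>{y, n+1}. sm n h x j) \<le> (\<Sum>j\<in>Ybar n. sm n h x j)"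
    using y by (intro sum_mono2) (auto simp: Ybar_def less_imp_le[OF sm_pos])
  then show ?thesis using y by (simp add: sm_sum)
qed

lemma RL_bound: "y \<in> {1..n} \<Longrightarrow> 0 \<le> c x y \<Longrightarrow> c x y \<le> 1 \<Longrightarrow>
  \<bar>L_RL2D (\<lambda>t. 1 - t) n c h x y\<bar> \<le> 1"
proof -
  assume y: "y \<in> {1..n}" and c: "0 \<le> c x y" "c x y \<le> 1"
  have a: "0 < sm n h x y" "0 < sm n h x (n+1)" by (rule sm_pos)+
  have b: "sm n h x y + sm n h x (n+1) \<le> 1" by (rule sm_two[OF y])
  have d1: "0 \<le> (1 - c x y) * sm n h x (n+1)" using a c by auto
  have d2: "(1 - c x y) * sm n h x (n+1) \<le> sm n h x (n+1)"
    using a c by (intro mult_left_le_one_le) auto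
  from d1 d2 show ?thesis unfolding RL_eq[OF y] using a b by (simp only: abs_le_iff) linarith
qed

lemma def_bound: "0 \<le> c x y \<Longrightarrow> c x y \<le> 1 \<Longrightarrow> \<bar>L_def n c h x y\<bar> \<le> 1"
  unfolding L_def_def by (auto simp: Ybar_def)

lemma sum_shift:
  fixes s q :: "nat \<Rightarrow> real"
  assumes s1: "sum s I = 1"
  shows "m - (\<Sum>j\<in>I. q j * s j) = (\<Sum>j\<in>I. s j * (m - q j))"
  using s1 by (simp add: sum_subtractf sum_distrib_left[symmetric] algebra_simps
        flip: sum_distrib_right)

lemma key_bound:
  fixes s q :: "nat \<Rightarrow> real"
  assumes fin: "finite I" and k: "k \<in> I" and s0: "\<And>j. j \<in> I \<Longrightarrow> 0 \<le> s j"
    and s1: "sum s I = 1" and sk: "\<And>j. j \<in> I \<Longrightarrow> s j \<le> s k"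
    and qm: "\<And>j. j \<in> I \<Longrightarrow> q j \<le> m"
  shows "m - q k \<le> real (card I) * (m - (\<Sum>j\<in>I. q j * s j))"
    and "(\<Sum>j\<in>I. q j * s j) \<le> m"
proof -
  have eq: "m - (\<Sum>j\<in>I. q j * s j) = (\<Sum>j\<in>I. s j * (m - q j))"
    using s1 by (simp add: sum_subtractf sum_distrib_left[symmetric] algebra_simps
        flip: sum_distrib_right)
  have nn: "\<And>j. j \<in> I \<Longrightarrow> 0 \<le> s j * (m - q j)" using s0 qm by auto
  have "s k * (m - q k) \<le> (\<Sum>j\<in>I. s j * (m - q j))"
    using nn k fin by (intro member_le_sum) auto
  moreover have "1 \<le> real (card I) * s k"
    using s1 sum_bounded_above[of I s "s k", OF sk] by simp
  moreover have "0 \<le> m - q k" using qm k by auto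
  ultimately have "m - q k \<le> real (card I) * (s k * (m - q k))"
    using mult_right_mono[of 1 "real (card I) * s k" "m - q k"] by (simp add: mult.assoc)
  also have "\<dots> \<le> real (card I) * (\<Sum>j\<in>I. s j * (m - q j))"
    using \<open>s k * (m - q k) \<le> _\<close> by (intro mult_left_mono) auto
  finally show "m - q k \<le> real (card I) * (m - (\<Sum>j\<in>I. q j * s j))" using eq by simp
  show "(\<Sum>j\<in>I. q j * s j) \<le> m" using eq nn sum_nonneg[of I "\<lambda>j. s j * (m - q j)"] by simp
qed


locale l2d =
  fixes M :: "'a measure" and D :: "('a \<times> nat) measure" and n :: nat
    and c :: "'a \<Rightarrow> nat \<Rightarrow> real"
  assumes D: "prob_space D" "sets D = sets (M \<Otimes>\<^sub>M count_space {1..n})"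
    and c_range: "\<And>x y. x \<in> space M \<Longrightarrow> y \<in> {1..n} \<Longrightarrow> 0 \<le> c x y \<and> c x y \<le> 1"
    and c_meas: "\<And>y. y \<in> {1..n} \<Longrightarrow> (\<lambda>x. c x y) \<in> borel_measurable M"
begin

definition "mu = distr D M fst"
definition "Dy y = density D (\<lambda>z. ennreal (indicator (space M \<times> {y}) z))"
definition "nu y = distr (Dy y) M fst"
definition "p y x = enn2real (RN_deriv mu (nu y) x)"

lemma spaceD: "space D = space M \<times> {1..n}"
  using sets_eq_imp_space_eq[OF D(2)] by (simp add: space_pair_measure)

lemma meas_D: "measurable D = measurable (M \<Otimes>\<^sub>M count_space {1..n})"
  by (intro ext measurable_cong_sets[OF D(2) refl])

lemma fst_meas[measurable]: "fst \<in> measurable D M"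
  unfolding meas_D by simp

lemma setY: "y \<in> {1..n} \<Longrightarrow> space M \<times> {y} \<in> sets D"
  unfolding D(2) by (intro pair_measureI) auto

lemma snd_meas[measurable]: "snd \<in> measurable D (count_space UNIV)"
  unfolding meas_D using measurable_compose[OF measurable_snd measurable_count_space] by (simp add: comp_def)


lemma probD: "prob_space D" by (rule D(1))

lemma sets_mu[simp]: "sets mu = sets M" by (simp add: mu_def)
lemma sets_nu[simp]: "sets (nu y) = sets M" by (simp add: nu_def)
lemma space_mu[simp]: "space mu = space M" by (simp add: mu_def)

lemma mu_prob: "prob_space mu"
  unfolding mu_def by (rule prob_space.prob_space_distr[OF D(1) fst_meas])

lemma mu_sf: "sigma_finite_measure mu"
  using mu_prob by (simp add: prob_space_def finite_measure_def)

lemma ind_meas[measurable]: "y \<in> {1..n} \<Longrightarrow> (\<lambda>z. indicator (space M \<times> {y}) z :: real) \<in> borel_measurable D"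
  using setY by simp

lemma fst_Dy[measurable]: "fst \<in> measurable (Dy y) M" unfolding Dy_def by simp

lemma meas_mu: "measurable mu = measurable M" by (intro ext measurable_cong_sets) simp_all

lemma nu_finite: assumes y: "y \<in> {1..n}" shows "finite_measure (nu y)"
proof (rule finite_measureI)
  have "emeasure (nu y) (space (nu y)) = emeasure (Dy y) (fst -` space M \<inter> space (Dy y))"
    unfolding nu_def by (simp add: emeasure_distr[OF fst_Dy sets.top])
  also have "\<dots> \<le> emeasure (Dy y) (space (Dy y))"
    by (intro emeasure_mono) auto
  also have "\<dots> = (\<integral>\<^sup>+z. ennreal (indicator (space M \<times> {y}) z) \<partial>D)"
    unfolding Dy_def using y by (subst emeasure_density) (auto intro!: nn_integral_cong)
  also have "\<dots> \<le> (\<integral>\<^sup>+z. 1 \<partial>D)"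
    by (intro nn_integral_mono) (auto split: split_indicator)
  also have "\<dots> = 1" using prob_space.emeasure_space_1[OF D(1)] by simp
  finally show "emeasure (nu y) (space (nu y)) \<noteq> \<infinity>" by (auto simp: top_unique)
qed

lemma nu_ac: assumes y: "y \<in> {1..n}" shows "absolutely_continuous mu (nu y)"
  unfolding absolutely_continuous_def
proof
  fix A assume A: "A \<in> null_sets mu"
  then have As: "A \<in> sets M" by (auto simp: null_sets_def)
  have "fst -` A \<inter> space D \<in> null_sets D"
    using A unfolding mu_def by (simp add: null_sets_distr_iff)
  then have ae: "AE z in D. z \<notin> fst -` A \<inter> space D"
    by (rule AE_not_in)
  have "fst -` A \<inter> space (Dy y) \<in> null_sets (Dy y)"
    unfolding Dy_def using y As
  proof (subst null_sets_density_iff)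
    show "fst -` A \<inter> space (density D (\<lambda>z. ennreal (indicator (space M \<times> {y}) z))) \<in> sets D \<and>
      (AE z in D. z \<in> fst -` A \<inter> space (density D (\<lambda>z. ennreal (indicator (space M \<times> {y}) z))) \<longrightarrow>
           ennreal (indicator (space M \<times> {y}) z) = 0)"
      using As apply simp by (rule AE_mp[OF ae]) (auto intro!: AE_I2)
  qed simp
  then show "A \<in> null_sets (nu y)"
    unfolding nu_def using As by (subst null_sets_distr_iff) (auto simp: Dy_def)
qed

lemma nu_integral:
  fixes g :: "'a \<Rightarrow> real"
  assumes y: "y \<in> {1..n}" and g[measurable]: "g \<in> borel_measurable M"
  shows "integral\<^sup>L (nu y) g = (\<integral>x. p y x * g x \<partial>mu)"
    and "integrable (nu y) g \<longleftrightarrow> integrable mu (\<lambda>x. p y x * g x)"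
  using g unfolding meas_mu[symmetric]
  using sigma_finite_measure.RN_deriv_integral[OF mu_sf finite_measure.sigma_finite_measure[OF nu_finite[OF y]] nu_ac[OF y]]
    sigma_finite_measure.RN_deriv_integrable[OF mu_sf finite_measure.sigma_finite_measure[OF nu_finite[OF y]] nu_ac[OF y]]
  by (auto simp: p_def)

lemma nu_integral_D:
  fixes g :: "'a \<Rightarrow> real"
  assumes y: "y \<in> {1..n}" and g[measurable]: "g \<in> borel_measurable M"
  shows "integral\<^sup>L (nu y) g = (\<integral>z. indicator (space M \<times> {y}) z * g (fst z) \<partial>D)"
    and "integrable (nu y) g \<longleftrightarrow> integrable D (\<lambda>z. indicator (space M \<times> {y}) z * g (fst z))"
proof -
  have m: "fst \<in> measurable (Dy y) M" unfolding Dy_def by simp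
  show "integral\<^sup>L (nu y) g = (\<integral>z. indicator (space M \<times> {y}) z * g (fst z) \<partial>D)"
    unfolding nu_def apply (subst integral_distr[where g=fst]) apply simp apply simp unfolding Dy_def using y
    by (subst integral_density) auto
  show "integrable (nu y) g \<longleftrightarrow> integrable D (\<lambda>z. indicator (space M \<times> {y}) z * g (fst z))"
    unfolding nu_def apply (subst integrable_distr_eq[where g=fst]) apply simp apply simp unfolding Dy_def using y
    by (subst integrable_density) auto
qed

lemma decomp:
  fixes F :: "'a \<Rightarrow> nat \<Rightarrow> real"
  assumes Fm: "\<And>y. y \<in> {1..n} \<Longrightarrow> (\<lambda>x. F x y) \<in> borel_measurable M"
    and Fb: "\<And>x y. x \<in> space M \<Longrightarrow> y \<in> {1..n} \<Longrightarrow> \<bar>F x y\<bar> \<le> B"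
  shows "integrable mu (\<lambda>x. \<Sum>y\<in>{1..n}. p y x * F x y)"
    and "(\<integral>z. F (fst z) (snd z) \<partial>D) = (\<integral>x. (\<Sum>y\<in>{1..n}. p y x * F x y) \<partial>mu)"
proof -
  interpret P: prob_space D by (rule D(1))
  have intD: "integrable D (\<lambda>z. indicator (space M \<times> {y}) z * F (fst z) y)" if y: "y \<in> {1..n}" for y
  proof (rule P.integrable_const_bound[where B=B])
    show "AE z in D. norm (indicator (space M \<times> {y}) z * F (fst z) y) \<le> B"
    proof (rule AE_I2)
      fix z assume "z \<in> space D"
      then have "fst z \<in> space M" by (auto simp: spaceD)
      then have "\<bar>F (fst z) y\<bar> \<le> B" using Fb y by auto
      then show "norm (indicator (space M \<times> {y}) z * F (fst z) y) \<le> B"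
        using \<open>\<bar>F (fst z) y\<bar> \<le> B\<close> by (auto split: split_indicator)
    qed
    show "(\<lambda>z. indicator (space M \<times> {y}) z * F (fst z) y) \<in> borel_measurable D"
      using y measurable_compose[OF fst_meas Fm[OF y]] by simp
  qed
  have intmu: "integrable mu (\<lambda>x. p y x * F x y)" if y: "y \<in> {1..n}" for y
    using intD[OF y] nu_integral(2)[OF y Fm[OF y]] nu_integral_D(2)[OF y Fm[OF y]] by simp
  show "integrable mu (\<lambda>x. \<Sum>y\<in>{1..n}. p y x * F x y)"
    by (rule Bochner_Integration.integrable_sum) (rule intmu, simp)
  have "(\<integral>z. F (fst z) (snd z) \<partial>D) = (\<integral>z. (\<Sum>y\<in>{1..n}. indicator (space M \<times> {y}) z * F (fst z) y) \<partial>D)"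
  proof (rule Bochner_Integration.integral_cong[OF refl])
    fix z assume "z \<in> space D"
    then obtain a b where z: "z = (a, b)" "a \<in> space M" "b \<in> {1..n}" by (cases z) (auto simp: spaceD)
    have "(\<Sum>y\<in>{1..n}. indicator (space M \<times> {y}) z * F (fst z) y) = (\<Sum>y\<in>{1..n}. if b = y then F a y else 0)"
      using z by (intro sum.cong) (auto split: split_indicator)
    also have "\<dots> = F a b" using z by simp
    finally show "F (fst z) (snd z) = (\<Sum>y\<in>{1..n}. indicator (space M \<times> {y}) z * F (fst z) y)"
      using z by simp
  qed
  also have "\<dots> = (\<Sum>y\<in>{1..n}. (\<integral>z. indicator (space M \<times> {y}) z * F (fst z) y \<partial>D))"
    using intD by (intro Bochner_Integration.integral_sum) auto
  also have "\<dots> = (\<Sum>y\<in>{1..n}. (\<integral>x. p y x * F x y \<partial>mu))"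
  proof (rule sum.cong[OF refl])
    fix y assume y: "y \<in> {1..n}"
    show "(\<integral>z. indicator (space M \<times> {y}) z * F (fst z) y \<partial>D) = (\<integral>x. p y x * F x y \<partial>mu)"
      using nu_integral(1)[OF y Fm[OF y]] nu_integral_D(1)[OF y Fm[OF y]] by simp
  qed
  also have "\<dots> = (\<integral>x. (\<Sum>y\<in>{1..n}. p y x * F x y) \<partial>mu)"
    using intmu by (intro Bochner_Integration.integral_sum[symmetric]) auto
  finally show "(\<integral>z. F (fst z) (snd z) \<partial>D) = (\<integral>x. (\<Sum>y\<in>{1..n}. p y x * F x y) \<partial>mu)" .
qed

definition "q x j = (if j \<le> n then p j x else (\<Sum>y\<in>{1..n}. p y x * (1 - c x y)))"
definition "Ptot x = (\<Sum>y\<in>{1..n}. p y x)"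
definition "kstar x = hpred n q x"
definition "mm x = q x (kstar x)"

lemma q_le_mm: "j \<in> Ybar n \<Longrightarrow> q x j \<le> mm x"
  unfolding mm_def kstar_def by (rule hpred_props(2))

lemma kstar_in: "kstar x \<in> Ybar n" unfolding kstar_def by (rule hpred_props(1))

lemma p_meas[measurable]: "(\<lambda>x. p y x) \<in> borel_measurable M"
proof -
  have "RN_deriv mu (nu y) \<in> borel_measurable M"
    using borel_measurable_RN_deriv[of mu "nu y"] unfolding meas_mu .
  then show ?thesis unfolding p_def by measurable
qed

lemma q_meas[measurable]: "(\<lambda>x. q x j) \<in> borel_measurable M"
proof (cases "j \<le> n")
  case True
  then show ?thesis by (simp add: q_def)
next
  case False
  have m: "(\<lambda>x. \<Sum>y\<in>{1..n}. p y x * (1 - c x y)) \<in> borel_measurable M"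
    by (rule borel_measurable_sum) (use c_meas in measurable)
  have "(\<lambda>x. q x j) = (\<lambda>x. \<Sum>y\<in>{1..n}. p y x * (1 - c x y))"
    using False by (simp add: q_def)
  then show ?thesis using m by metis
qed

lemma q_H: "q \<in> H_all M n" unfolding H_all_def by simp

lemma H_restr:
  assumes h: "h \<in> H_all M n"
  defines "h' \<equiv> (\<lambda>x y. if y \<in> Ybar n then h x y else 0)"
  shows "\<And>y. (\<lambda>x. h' x y) \<in> borel_measurable M"
    and "\<And>x. hpred n h x = hpred n h' x"
    and "\<And>x j. j \<in> Ybar n \<Longrightarrow> sm n h x j = sm n h' x j"
proof -
  fix y show "(\<lambda>x. h' x y) \<in> borel_measurable M" using h by (cases "y \<in> Ybar n") (auto simp: h'_def H_all_def)
next
  fix x show "hpred n h x = hpred n h' x" by (rule hpred_cong) (simp add: h'_def)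
next
  fix x j assume "j \<in> Ybar n" then show "sm n h x j = sm n h' x j"
    unfolding sm_def h'_def by (auto intro!: sum.cong)
qed

lemma hpred_meas:
  assumes h: "h \<in> H_all M n"
  shows "(\<lambda>x. hpred n h x) \<in> measurable M (count_space UNIV)"
proof -
  define h' where "h' = (\<lambda>x y. if y \<in> Ybar n then h x y else 0)"
  have [measurable]: "\<And>y. (\<lambda>x. h' x y) \<in> borel_measurable M" using H_restr(1)[OF h] unfolding h'_def .
  have e: "(\<lambda>x. hpred n h x) = (\<lambda>x. hpred n h' x)" using H_restr(2)[OF h] unfolding h'_def by auto
  show ?thesis unfolding e hpred_def by measurable
qed

lemma sm_meas[measurable]:
  assumes h: "h \<in> H_all M n" and j: "j \<in> Ybar n"
  shows "(\<lambda>x. sm n h x j) \<in> borel_measurable M"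
proof -
  define h' where "h' = (\<lambda>x y. if y \<in> Ybar n then h x y else 0)"
  have [measurable]: "\<And>y. (\<lambda>x. h' x y) \<in> borel_measurable M" using H_restr(1)[OF h] unfolding h'_def .
  have e: "(\<lambda>x. sm n h x j) = (\<lambda>x. sm n h' x j)" using H_restr(3)[OF h j] unfolding h'_def by auto
  show ?thesis unfolding e unfolding sm_def by measurable
qed

lemma kstar_meas[measurable]: "kstar \<in> measurable M (count_space UNIV)"
  using hpred_meas[OF q_H] unfolding kstar_def[abs_def] .

lemma sumRL:
  "(\<Sum>y\<in>{1..n}. p y x * L_RL2D (\<lambda>t. 1 - t) n c h x y) = Ptot x - (\<Sum>j\<in>Ybar n. q x j * sm n h x j)"
proof -
  have "(\<Sum>j\<in>Ybar n. q x j * sm n h x j) = q x (n+1) * sm n h x (n+1) + (\<Sum>j\<in>{1..n}. q x j * sm n h x j)"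
    by (simp add: Ybar_ins)
  also have "(\<Sum>j\<in>{1..n}. q x j * sm n h x j) = (\<Sum>j\<in>{1..n}. p j x * sm n h x j)"
    by (rule sum.cong) (auto simp: q_def)
  finally have e1: "(\<Sum>j\<in>Ybar n. q x j * sm n h x j) = q x (n+1) * sm n h x (n+1) + (\<Sum>j\<in>{1..n}. p j x * sm n h x j)" .
  have "(\<Sum>y\<in>{1..n}. p y x * L_RL2D (\<lambda>t. 1 - t) n c h x y)
      = (\<Sum>y\<in>{1..n}. p y x - p y x * sm n h x y - sm n h x (n+1) * (p y x * (1 - c x y)))"
    by (rule sum.cong) (simp_all add: RL_eq algebra_simps)
  also have "\<dots> = Ptot x - (\<Sum>y\<in>{1..n}. p y x * sm n h x y) - sm n h x (n+1) * q x (n+1)"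
    by (simp add: sum_subtractf sum_distrib_left Ptot_def q_def)
  finally show ?thesis using e1 by simp
qed

lemma sumdef:
  "(\<Sum>y\<in>{1..n}. p y x * L_def n c h x y) = Ptot x - q x (hpred n h x)"
proof -
  define k where "k = hpred n h x"
  have k: "k \<in> Ybar n" unfolding k_def by (rule hpred_props)
  show ?thesis
  proof (cases "k \<le> n")
    case True
    then have k1: "k \<in> {1..n}" using k by (auto simp: Ybar_def)
    have "(\<Sum>y\<in>{1..n}. p y x * L_def n c h x y) = (\<Sum>y\<in>{1..n}. p y x - (if y = k then p y x else 0))"
      by (rule sum.cong) (use True k1 in \<open>auto simp: L_def_def k_def[symmetric]\<close>)
    also have "\<dots> = Ptot x - p k x" using k1 by (simp add: sum_subtractf Ptot_def)
    finally show ?thesis using True by (simp add: q_def k_def)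
  next
    case False
    then have kn: "k = n + 1" using k by (auto simp: Ybar_def)
    have "(\<Sum>y\<in>{1..n}. p y x * L_def n c h x y) = (\<Sum>y\<in>{1..n}. p y x - p y x * (1 - c x y))"
      by (rule sum.cong) (use kn in \<open>auto simp: L_def_def k_def[symmetric] algebra_simps\<close>)
    also have "\<dots> = Ptot x - q x (n+1)" by (simp add: sum_subtractf Ptot_def q_def)
    finally show ?thesis using kn by (simp add: k_def)
  qed
qed

lemma risk_RL_eq:
  assumes h: "h \<in> H_all M n"
  shows "risk D (L_RL2D (\<lambda>t. 1 - t) n c h) = (\<integral>x. Ptot x - (\<Sum>j\<in>Ybar n. q x j * sm n h x j) \<partial>mu)"
    and "integrable mu (\<lambda>x. Ptot x - (\<Sum>j\<in>Ybar n. q x j * sm n h x j))"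
proof -
  have Fm: "(\<lambda>x. L_RL2D (\<lambda>t. 1 - t) n c h x y) \<in> borel_measurable M" if y: "y \<in> {1..n}" for y
  proof -
    have e: "(\<lambda>x. L_RL2D (\<lambda>t. 1 - t) n c h x y) = (\<lambda>x. 1 - sm n h x y - (1 - c x y) * sm n h x (n+1))"
      by (intro ext) (rule RL_eq[OF y])
    have [measurable]: "(\<lambda>x. sm n h x y) \<in> borel_measurable M" "(\<lambda>x. sm n h x (n+1)) \<in> borel_measurable M"
      "(\<lambda>x. c x y) \<in> borel_measurable M"
      using sm_meas[OF h] Ybar_mem y c_meas by auto
    show ?thesis unfolding e by measurable
  qed
  have Fb: "\<bar>L_RL2D (\<lambda>t. 1 - t) n c h x y\<bar> \<le> 1" if "x \<in> space M" "y \<in> {1..n}" for x y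
    using RL_bound[OF that(2)] c_range[OF that] by auto
  note d = decomp[where F="\<lambda>x y. L_RL2D (\<lambda>t. 1 - t) n c h x y", OF Fm Fb]
  have e: "\<And>x. (\<Sum>y\<in>{1..n}. p y x * L_RL2D (\<lambda>t. 1 - t) n c h x y) = Ptot x - (\<Sum>j\<in>Ybar n. q x j * sm n h x j)"
    by (rule sumRL)
  show "risk D (L_RL2D (\<lambda>t. 1 - t) n c h) = (\<integral>x. Ptot x - (\<Sum>j\<in>Ybar n. q x j * sm n h x j) \<partial>mu)"
    unfolding Defs.risk_def using d(2) e by simp
  show "integrable mu (\<lambda>x. Ptot x - (\<Sum>j\<in>Ybar n. q x j * sm n h x j))"
    using d(1) unfolding e .
qed

lemma risk_def_eq:
  assumes h: "h \<in> H_all M n"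
  shows "risk D (L_def n c h) = (\<integral>x. Ptot x - q x (hpred n h x) \<partial>mu)"
    and "integrable mu (\<lambda>x. Ptot x - q x (hpred n h x))"
proof -
  have Fm: "(\<lambda>x. L_def n c h x y) \<in> borel_measurable M" if y: "y \<in> {1..n}" for y
  proof -
    have [measurable]: "(\<lambda>x. c x y) \<in> borel_measurable M" using c_meas y by auto
    have hm[measurable]: "(\<lambda>x. hpred n h x) \<in> measurable M (count_space UNIV)" by (rule hpred_meas[OF h])
    have [measurable]: "Measurable.pred M (\<lambda>x. hpred n h x \<in> {1..n})"
      using measurable_sets[OF hm, of "{1..n}"] unfolding pred_def by (simp add: vimage_def Int_def conj_commute)
    show ?thesis unfolding L_def_def by measurable
  qed
  have Fb: "\<bar>L_def n c h x y\<bar> \<le> 1" if "x \<in> space M" "y \<in> {1..n}" for x y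
    using def_bound c_range[OF that] by auto
  note d = decomp[where F="\<lambda>x y. L_def n c h x y", OF Fm Fb]
  have e: "\<And>x. (\<Sum>y\<in>{1..n}. p y x * L_def n c h x y) = Ptot x - q x (hpred n h x)"
    by (rule sumdef)
  show "risk D (L_def n c h) = (\<integral>x. Ptot x - q x (hpred n h x) \<partial>mu)"
    unfolding Defs.risk_def using d(2) e by simp
  show "integrable mu (\<lambda>x. Ptot x - q x (hpred n h x))"
    using d(1) unfolding e .
qed

lemma q_int: assumes j: "j \<in> Ybar n" shows "integrable mu (\<lambda>x. q x j)"
proof -
  define F where "F = (\<lambda>x y. if j \<le> n then (if y = j then 1 else 0) else 1 - c x y)"
  have Fm: "(\<lambda>x. F x y) \<in> borel_measurable M" if y: "y \<in> {1..n}" for y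
    using c_meas[OF y] unfolding F_def by (cases "j \<le> n") simp_all
  have Fb: "\<bar>F x y\<bar> \<le> 1" if "x \<in> space M" "y \<in> {1..n}" for x y
    using c_range[OF that] unfolding F_def by auto
  have e: "(\<Sum>y\<in>{1..n}. p y x * F x y) = q x j" for x
  proof (cases "j \<le> n")
    case True
    then have j1: "j \<in> {1..n}" using j by (auto simp: Ybar_def)
    have "(\<Sum>y\<in>{1..n}. p y x * F x y) = (\<Sum>y\<in>{1..n}. if y = j then p y x else 0)"
      by (rule sum.cong) (auto simp: F_def True)
    also have "\<dots> = p j x" using j1 by simp
    finally show ?thesis using True by (simp add: q_def)
  next
    case False
    then show ?thesis by (simp add: F_def q_def)
  qed
  show ?thesis using decomp(1)[where F=F, OF Fm Fb] unfolding e .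
qed

lemma Ptot_int: "integrable mu Ptot"
proof -
  have "Ptot = (\<lambda>x. \<Sum>j\<in>{1..n}. q x j)" unfolding Ptot_def q_def by (intro ext sum.cong) auto
  moreover have "integrable mu (\<lambda>x. \<Sum>j\<in>{1..n}. q x j)"
    by (rule Bochner_Integration.integrable_sum) (rule q_int, simp add: Ybar_mem)
  ultimately show ?thesis by simp
qed

lemma hpred_q: "hpred n q x = kstar x" by (simp add: kstar_def)

lemma mm_int: "integrable mu mm"
proof -
  have "integrable mu (\<lambda>x. Ptot x - mm x)"
    using risk_def_eq(2)[OF q_H] by (simp add: hpred_q mm_def)
  then have "integrable mu (\<lambda>x. Ptot x - (Ptot x - mm x))"
    by (rule Bochner_Integration.integrable_diff[OF Ptot_int])
  then show ?thesis by simp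
qed

definition "V = (\<integral>x. Ptot x - mm x \<partial>mu)"

lemma risk_q: "risk D (L_def n c q) = V"
  using risk_def_eq(1)[OF q_H] by (simp add: hpred_q mm_def V_def)

lemma int_Pm: "integrable mu (\<lambda>x. Ptot x - mm x)"
  using Ptot_int mm_int by (intro Bochner_Integration.integrable_diff)

lemma def_ge: assumes h: "h \<in> H_all M n" shows "V \<le> risk D (L_def n c h)"
  unfolding risk_def_eq(1)[OF h] V_def
  by (rule Bochner_Integration.integral_mono[OF int_Pm risk_def_eq(2)[OF h]])
     (use q_le_mm[OF hpred_props(1)] in auto)

lemma G_props:
  "(\<Sum>j\<in>Ybar n. q x j * sm n h x j) \<le> mm x"
  "mm x - q x (hpred n h x) \<le> real (n+1) * (mm x - (\<Sum>j\<in>Ybar n. q x j * sm n h x j))"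
proof -
  have a: "finite (Ybar n)" "hpred n h x \<in> Ybar n" "\<And>j. j \<in> Ybar n \<Longrightarrow> 0 \<le> sm n h x j"
    "sum (sm n h x) (Ybar n) = 1" "\<And>j. j \<in> Ybar n \<Longrightarrow> sm n h x j \<le> sm n h x (hpred n h x)"
    "\<And>j. j \<in> Ybar n \<Longrightarrow> q x j \<le> mm x"
    using hpred_props[where n=n and h=h and x=x] sm_sum q_le_mm
    by (auto intro: less_imp_le[OF sm_pos] sm_mono)
  show "(\<Sum>j\<in>Ybar n. q x j * sm n h x j) \<le> mm x" by (rule key_bound(2)[OF a])
  show "mm x - q x (hpred n h x) \<le> real (n+1) * (mm x - (\<Sum>j\<in>Ybar n. q x j * sm n h x j))"
    using key_bound(1)[OF a] by (simp add: card_Ybar)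
qed

lemma RL_ge: assumes h: "h \<in> H_all M n" shows "V \<le> risk D (L_RL2D (\<lambda>t. 1 - t) n c h)"
  unfolding risk_RL_eq(1)[OF h] V_def
  by (rule Bochner_Integration.integral_mono[OF int_Pm risk_RL_eq(2)[OF h]])
     (use G_props(1) in auto)

lemma H_ne: "H_all M n \<noteq> {}"
proof -
  have "(\<lambda>x j. 0::real) \<in> H_all M n" by (simp add: H_all_def)
  then show ?thesis by blast
qed

lemma best_def: "best_risk D (H_all M n) (L_def n c) = V"
proof (rule antisym)
  have bdd: "bdd_below ((\<lambda>h. risk D (L_def n c h)) ` H_all M n)"
    using def_ge by (intro bdd_belowI2) auto
  show "best_risk D (H_all M n) (L_def n c) \<le> V"
    unfolding best_risk_def using cINF_lower[OF bdd q_H] risk_q by simp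
  show "V \<le> best_risk D (H_all M n) (L_def n c)"
    unfolding best_risk_def using H_ne def_ge by (intro cINF_greatest) auto
qed

lemma best_RL: "best_risk D (H_all M n) (L_RL2D (\<lambda>t. 1 - t) n c) = V"
proof (rule antisym)
  have bdd: "bdd_below ((\<lambda>h. risk D (L_RL2D (\<lambda>t. 1 - t) n c h)) ` H_all M n)"
    using RL_ge by (intro bdd_belowI2) auto
  define K where "K = (\<integral>x. (\<Sum>j\<in>Ybar n. mm x - q x j) \<partial>mu)"
  have K0: "0 \<le> K" unfolding K_def
    by (intro Bochner_Integration.integral_nonneg sum_nonneg) (use q_le_mm in auto)
  have intK: "integrable mu (\<lambda>x. \<Sum>j\<in>Ybar n. mm x - q x j)"
    by (rule Bochner_Integration.integrable_sum) (intro Bochner_Integration.integrable_diff mm_int q_int, simp)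
  have step: "best_risk D (H_all M n) (L_RL2D (\<lambda>t. 1 - t) n c) \<le> V + exp (- t) * K" for t
  proof -
    define ht where "ht = (\<lambda>x j. if j = kstar x then t else (0::real))"
    have htH: "ht \<in> H_all M n" unfolding H_all_def ht_def by auto
    have pw: "Ptot x - (\<Sum>j\<in>Ybar n. q x j * sm n ht x j) \<le> (Ptot x - mm x) + exp (- t) * (\<Sum>j\<in>Ybar n. mm x - q x j)" for x
    proof -
      have "mm x - (\<Sum>j\<in>Ybar n. q x j * sm n ht x j) = (\<Sum>j\<in>Ybar n. sm n ht x j * (mm x - q x j))"
        by (rule sum_shift[OF sm_sum])
      also have "\<dots> \<le> (\<Sum>j\<in>Ybar n. exp (- t) * (mm x - q x j))"
      proof (rule sum_mono)
        fix j assume j: "j \<in> Ybar n"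
        show "sm n ht x j * (mm x - q x j) \<le> exp (- t) * (mm x - q x j)"
        proof (cases "j = kstar x")
          case True then show ?thesis by (simp add: mm_def)
        next
          case False
          have "sm n ht x j \<le> exp (ht x j) / exp (ht x (kstar x))"
            by (rule sm_le_exp[OF j kstar_in])
          also have "\<dots> = exp (- t)" using False by (simp add: ht_def exp_minus field_simps)
          finally show ?thesis using q_le_mm[OF j, of x] by (intro mult_right_mono) auto
        qed
      qed
      also have "\<dots> = exp (- t) * (\<Sum>j\<in>Ybar n. mm x - q x j)" by (simp add: sum_distrib_left)
      finally show ?thesis by simp
    qed
    have "best_risk D (H_all M n) (L_RL2D (\<lambda>t. 1 - t) n c) \<le> risk D (L_RL2D (\<lambda>t. 1 - t) n c ht)"
      unfolding best_risk_def by (rule cINF_lower[OF bdd htH])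
    also have "\<dots> \<le> (\<integral>x. (Ptot x - mm x) + exp (- t) * (\<Sum>j\<in>Ybar n. mm x - q x j) \<partial>mu)"
      unfolding risk_RL_eq(1)[OF htH]
      by (rule Bochner_Integration.integral_mono[OF risk_RL_eq(2)[OF htH]])
         (use int_Pm intK pw in auto)
    also have "\<dots> = V + exp (- t) * K"
      unfolding V_def K_def using int_Pm intK by simp
    finally show ?thesis .
  qed
  show "best_risk D (H_all M n) (L_RL2D (\<lambda>t. 1 - t) n c) \<le> V"
  proof (rule ccontr)
    let ?b = "best_risk D (H_all M n) (L_RL2D (\<lambda>t. 1 - t) n c)"
    assume "\<not> ?b \<le> V"
    then have d: "0 < ?b - V" by simp
    define t where "t = - ln ((?b - V) / (K + 1))"
    have et: "exp (- t) = (?b - V) / (K + 1)" unfolding t_def using d K0 by simp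
    have "exp (- t) * K < ?b - V" unfolding et using d K0 by (simp add: field_simps)
    with step[of t] show False by simp
  qed
  show "V \<le> best_risk D (H_all M n) (L_RL2D (\<lambda>t. 1 - t) n c)"
    unfolding best_risk_def using H_ne RL_ge by (intro cINF_greatest) auto
qed

lemma part1: assumes h: "h \<in> H_all M n"
  shows "risk D (L_def n c h) - V \<le> real (n + 1) * (risk D (L_RL2D (\<lambda>t. 1 - t) n c h) - V)"
proof -
  let ?G = "\<lambda>x. \<Sum>j\<in>Ybar n. q x j * sm n h x j"
  have i2: "integrable mu (\<lambda>x. (Ptot x - mm x) + real (n+1) * ((Ptot x - ?G x) - (Ptot x - mm x)))"
    by (intro Bochner_Integration.integrable_add Bochner_Integration.integrable_mult_right
        Bochner_Integration.integrable_diff int_Pm risk_RL_eq(2)[OF h])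
  have "risk D (L_def n c h) \<le> (\<integral>x. (Ptot x - mm x) + real (n+1) * ((Ptot x - ?G x) - (Ptot x - mm x)) \<partial>mu)"
    unfolding risk_def_eq(1)[OF h]
  proof (rule Bochner_Integration.integral_mono[OF risk_def_eq(2)[OF h] i2])
    fix x
    show "Ptot x - q x (hpred n h x) \<le> (Ptot x - mm x) + real (n+1) * ((Ptot x - ?G x) - (Ptot x - mm x))"
      using G_props(2)[where x=x and h=h] by (simp add: algebra_simps)
  qed
  also have "\<dots> = V + real (n+1) * (risk D (L_RL2D (\<lambda>t. 1 - t) n c h) - V)"
    unfolding V_def risk_RL_eq(1)[OF h]
    by (simp only: Bochner_Integration.integral_add[OF int_Pm Bochner_Integration.integrable_mult_right[OF
          Bochner_Integration.integrable_diff[OF risk_RL_eq(2)[OF h] int_Pm]]]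
        integral_mult_right_zero Bochner_Integration.integral_diff[OF risk_RL_eq(2)[OF h] int_Pm])
  finally show ?thesis by simp
qed

end
theorem corollary5:
  fixes M :: "'a measure" and D :: "('a \<times> nat) measure" and n :: nat
    and c :: "'a \<Rightarrow> nat \<Rightarrow> real"
  assumes D: "prob_space D" "sets D = sets (M \<Otimes>\<^sub>M count_space {1..n})"
    and c_range: "\<And>x y. x \<in> space M \<Longrightarrow> y \<in> {1..n} \<Longrightarrow> 0 \<le> c x y \<and> c x y \<le> 1"
    and c_meas: "\<And>y. y \<in> {1..n} \<Longrightarrow> (\<lambda>x. c x y) \<in> borel_measurable M"
  shows "(\<forall>h\<in>H_all M n.
            risk D (L_def n c h) - best_risk D (H_all M n) (L_def n c)
            \<le> real (n + 1) * (risk D (L_RL2D (\<lambda>t. 1 - t) n c h)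
                 - best_risk D (H_all M n) (L_RL2D (\<lambda>t. 1 - t) n c)))
       \<and> (\<forall>hk :: nat \<Rightarrow> 'a \<Rightarrow> nat \<Rightarrow> real. (\<forall>k. hk k \<in> H_all M n) \<longrightarrow>
            (\<lambda>k. risk D (L_RL2D (\<lambda>t. 1 - t) n c (hk k))
                 - best_risk D (H_all M n) (L_RL2D (\<lambda>t. 1 - t) n c)) \<longlonglongrightarrow> 0 \<longrightarrow>
            (\<lambda>k. risk D (L_def n c (hk k))
                 - best_risk D (H_all M n) (L_def n c)) \<longlonglongrightarrow> 0)"
proof -
  interpret l2d M D n c by (rule l2d.intro[OF D(1) D(2) c_range c_meas])
  have P1: "\<forall>h\<in>H_all M n.
            risk D (L_def n c h) - best_risk D (H_all M n) (L_def n c)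
            \<le> real (n + 1) * (risk D (L_RL2D (\<lambda>t. 1 - t) n c h)
                 - best_risk D (H_all M n) (L_RL2D (\<lambda>t. 1 - t) n c))"
    unfolding best_def best_RL using part1 by blast
  have P2: "(\<lambda>k. risk D (L_def n c (hk k)) - best_risk D (H_all M n) (L_def n c)) \<longlonglongrightarrow> 0"
    if hk: "\<forall>k. hk k \<in> H_all M n"
      and lim: "(\<lambda>k. risk D (L_RL2D (\<lambda>t. 1 - t) n c (hk k))
                 - best_risk D (H_all M n) (L_RL2D (\<lambda>t. 1 - t) n c)) \<longlonglongrightarrow> 0"
    for hk :: "nat \<Rightarrow> 'a \<Rightarrow> nat \<Rightarrow> real"
  proof (rule tendsto_sandwich[where f="\<lambda>k. 0" and h="\<lambda>k. real (n + 1) * (risk D (L_RL2D (\<lambda>t. 1 - t) n c (hk k)) - V)"])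
    show "\<forall>\<^sub>F k in sequentially. 0 \<le> risk D (L_def n c (hk k)) - best_risk D (H_all M n) (L_def n c)"
      using def_ge hk by (simp add: best_def)
    show "\<forall>\<^sub>F k in sequentially. risk D (L_def n c (hk k)) - best_risk D (H_all M n) (L_def n c)
        \<le> real (n + 1) * (risk D (L_RL2D (\<lambda>t. 1 - t) n c (hk k)) - V)"
      using part1 hk by (simp add: best_def)
    show "((\<lambda>k. 0::real) \<longlonglongrightarrow> 0)" by simp
    show "(\<lambda>k. real (n + 1) * (risk D (L_RL2D (\<lambda>t. 1 - t) n c (hk k)) - V)) \<longlonglongrightarrow> 0"
      using tendsto_mult_right_zero[OF lim[unfolded best_RL], of "real (n+1)"] by simp
  qed
  show ?thesis using P1 P2 by blast
qed

end
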